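(* Let $\boldsymbol X \in \mathbb{R}^{n\times d}$, $\boldsymbol y \in \mathbb{R}^n$, $\boldsymbol M = \boldsymbol X^\top \boldsymbol X$, $\boldsymbol r = \boldsymbol X^\top \boldsymbol y$. Assume (A1) $\boldsymbol r > \mathbf 0$ and (A2) $M_{ij}\le 0$ for all $i\neq j$. Let $\boldsymbol C>\mathbf 0$, $\boldsymbol k>\mathbf 0$ in $\mathbb{R}^d$, and for $\varepsilon>0$ let $\boldsymbol\theta^{(\varepsilon)}(t)$ solve $$\frac{\mathrm d \theta_i}{\mathrm d t} = \theta_i\Big(r_i - \sum_{j=1}^d M_{ij}\theta_j\Big),\quad i=1,\dots,d,$$ with $\boldsymbol\theta^{(\varepsilon)}(0) = (C_1\varepsilon^{k_1},\dots,C_d\varepsilon^{k_d})$. Using the rescaled time $s$ with $t = s\log\frac1\varepsilon$, define $w_i^{(\varepsilon)}(s) = \frac{\log\theta_i^{(\varepsilon)}(s\log\frac1\varepsilon)}{\log\varepsilon}$ and $\boldsymbol z^{(\varepsilon)}(s) = \int_0^s \boldsymbol\theta^{(\varepsilon)}(u\log\tfrac1\varepsilon)\,\mathrm du$. For $s\ge0$, let $(\boldsymbol w(s),\boldsymbol z(s))\in(\mathbb{R}^d)^2$ be the unique solution of the linear complementarity problem $$\boldsymbol w = \boldsymbol k - s\boldsymbol r + \boldsymbol M\boldsymbol z,\qquad \boldsymbol w\ge\mathbf 0,\quad \boldsymbol z\ge \mathbf 0,\quad \boldsymbol w^\top\boldsymbol z = 0.$$ Then $\boldsymbol w^{(\varepsilon)}(s)\to\boldsymbol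 w(s)$ and $\boldsymbol z^{(\varepsilon)}(s)\to\boldsymbol z(s)$ as $\varepsilon\to0$, uniformly for $s$ in compact subsets of $\mathbb{R}_{\ge0}$.
   Context: Vector inequalities are coordinatewise. Under (A1)–(A2), $\boldsymbol M$ is symmetric positive definite, so the linear complementarity problem above has a unique solution for each $s$. *)

theory Defs
  imports "HOL-Analysis.Analysis"
begin

end

theory Submission
  imports Defs
begin


lemma key_ineq:
  fixes M :: "real^'d^'d" and a b p :: "real^'d"
  assumes A2: "\<forall>i j. i \<noteq> j \<longrightarrow> M $ i $ j \<le> 0"
    and le: "\<forall>j. a $ j \<le> b $ j + m * p $ j" and eq: "a $ i = b $ i + m * p $ i"
  shows "(M *v b) $ i + m * (M *v p) $ i \<le> (M *v a) $ i"
proof -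
  have "\<forall>j. M$i$j * b$j + m * (M$i$j * p$j) \<le> M$i$j * a$j"
  proof
    fix j show "M$i$j * b$j + m * (M$i$j * p$j) \<le> M$i$j * a$j"
    proof (cases "j = i")
      case True then show ?thesis using eq by (simp add: algebra_simps)
    next
      case False
      then have "M$i$j \<le> 0" using A2 by auto
      then have "M$i$j * (b$j + m*p$j) \<le> M$i$j * a$j" using le mult_left_mono_neg by blast
      then show ?thesis by (simp add: algebra_simps)
    qed
  qed
  then have "(\<Sum>j\<in>UNIV. M$i$j * b$j + m * (M$i$j * p$j)) \<le> (\<Sum>j\<in>UNIV. M$i$j * a$j)"
    by (intro sum_mono) auto
  then show ?thesis by (simp add: matrix_vector_mult_def sum.distrib sum_distrib_left)
qed

lemma finite_argmax: fixes f :: "'a::finite \<Rightarrow> real" shows "\<exists>i. \<forall>j. f j \<le> f i"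
proof -
  have "Max (range f) \<in> range f" by (intro Max_in) auto
  then obtain i where "f i = Max (range f)" by (metis imageE)
  moreover have "\<forall>j. f j \<le> Max (range f)" by (auto intro: Max_ge)
  ultimately show ?thesis by metis
qed

lemma cont_comp: "continuous_on S Z \<Longrightarrow> continuous_on S (\<lambda>s. (Z s :: real^'d) $ j)"
  by (intro continuous_intros)

lemma left_diff_lt:
  assumes d: "(f has_real_derivative D) (at x within {0..S})" and x: "0 < x" "x \<le> S" and Dc: "D < c"
  shows "\<exists>y. 0 \<le> y \<and> y < x \<and> f x - f y < c * (x - y)"
proof -
  from d have "((\<lambda>y. (f y - f x) / (y - x)) \<longlongrightarrow> D) (at x within {0..S})"
    by (simp add: has_field_derivative_iff)
  then have "\<forall>\<^sub>F y in at x within {0..S}. (f y - f x)/(y - x) < c" using Dc by (rule order_tendstoD)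
  then obtain d where d: "d > 0" "\<forall>y\<in>{0..S}. y \<noteq> x \<and> dist y x < d \<longrightarrow> (f y - f x)/(y-x) < c"
    by (auto simp: eventually_at)
  define y where "y = max 0 (x - d/2)"
  have y: "0 \<le> y" "y < x" "y \<le> S" "dist y x < d" using x d(1) by (auto simp: y_def dist_real_def)
  then have "(f y - f x)/(y-x) < c" using d(2) by auto
  then have "f y - f x > c * (y - x)" using y(2) by (simp add: neg_divide_less_eq mult.commute)
  then show ?thesis using y by (intro exI[of _ y]) (auto simp: algebra_simps)
qed

lemma left_diff_gt:
  assumes d: "(f has_real_derivative D) (at x within {0..S})" and x: "0 < x" "x \<le> S" and Dc: "D > c"
  shows "\<exists>y. 0 \<le> y \<and> y < x \<and> f x - f y > c * (x - y)"
proof -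
  have "((\<lambda>x. - f x) has_real_derivative - D) (at x within {0..S})" using d by (rule DERIV_minus)
  from left_diff_lt[OF this x, of "-c"] Dc obtain y where "0 \<le> y \<and> y < x \<and> - f x - - f y < - c * (x - y)" by auto
  then show ?thesis by (intro exI[of _ y]) (auto simp: algebra_simps)
qed

context
  fixes M :: "real^'d^'d" and r k :: "real^'d" and w z :: "real \<Rightarrow> real^'d"
  assumes A1: "\<forall>i. r $ i > 0"
    and A2: "\<forall>i j. i \<noteq> j \<longrightarrow> M $ i $ j \<le> 0"
    and k_pos: "\<forall>i. k $ i > 0"
    and lcp_eq: "\<And>s. s \<ge> 0 \<Longrightarrow> w s = k - s *\<^sub>R r + M *v z s"
    and lcp_w: "\<And>s. s \<ge> 0 \<Longrightarrow> \<forall>i. w s $ i \<ge> 0"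
    and lcp_z: "\<And>s. s \<ge> 0 \<Longrightarrow> \<forall>i. z s $ i \<ge> 0"
    and lcp_compl: "\<And>s. s \<ge> 0 \<Longrightarrow> w s \<bullet> z s = 0"
begin

lemma w_comp: "s \<ge> 0 \<Longrightarrow> w s $ i = k $ i - s * r $ i + (M *v z s) $ i"
  using lcp_eq by simp

lemma wnn: "s \<ge> 0 \<Longrightarrow> 0 \<le> k $ i - s * r $ i + (M *v z s) $ i"
  using lcp_w w_comp by metis

lemma compl_i: assumes "s \<ge> 0" shows "w s $ i * z s $ i = 0"
proof -
  have "(\<Sum>j\<in>UNIV. w s $ j * z s $ j) = 0" using lcp_compl[OF assms] by (simp add: inner_vec_def)
  moreover have "\<forall>j\<in>UNIV. 0 \<le> w s $ j * z s $ j" using lcp_w[OF assms] lcp_z[OF assms] by auto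
  ultimately show ?thesis using sum_nonneg_eq_0_iff[of UNIV "\<lambda>j. w s $ j * z s $ j"] by auto
qed

lemma compl2: assumes "s \<ge> 0" "0 < z s $ i" shows "k $ i - s * r $ i + (M *v z s) $ i = 0"
  using compl_i[OF assms(1), of i] assms w_comp[OF assms(1), of i] by auto

lemma p_exists: "\<exists>p. (\<forall>i. p $ i > 0) \<and> (\<forall>i. (M *v p) $ i \<ge> 1/2)"
proof -
  define s0 where "s0 = (\<Sum>i\<in>UNIV. (k$i + 1) / r$i)"
  have tnn: "0 \<le> (k$i+1)/r$i" for i using k_pos A1 by (smt (verit) divide_nonneg_pos)
  have s0i: "(k$i+1)/r$i \<le> s0" for i unfolding s0_def
    by (rule member_le_sum) (use tnn in auto)
  have s0nn: "0 \<le> s0" unfolding s0_def by (rule sum_nonneg) (use tnn in auto)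
  have Mz: "(M *v z s0)$i \<ge> 1" for i
  proof -
    have "k$i + 1 \<le> s0 * r$i" using s0i[of i] A1 by (simp add: pos_divide_le_eq)
    moreover have "0 \<le> k$i - s0*r$i + (M *v z s0)$i" using wnn[OF s0nn] .
    ultimately show ?thesis by linarith
  qed
  define A where "A = (\<Sum>i\<in>UNIV. \<Sum>j\<in>UNIV. \<bar>M$i$j\<bar>)"
  have Ann: "A \<ge> 0" unfolding A_def by (intro sum_nonneg) auto
  define \<delta> where "\<delta> = 1/(2*(A+1))"
  have dpos: "\<delta> > 0" using Ann by (simp add: \<delta>_def)
  have dA: "\<delta>*A \<le> 1/2" using Ann by (simp add: \<delta>_def field_simps)
  define p where "p = z s0 + (\<chi> j. \<delta>)"
  have ppos: "p$i > 0" for i using lcp_z[OF s0nn] dpos by (simp add: p_def add_nonneg_pos)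
  have Mp: "(M*v p)$i = (M *v z s0)$i + \<delta> * (\<Sum>j\<in>UNIV. M$i$j)" for i
    by (simp add: matrix_vector_mult_def sum.distrib sum_distrib_left p_def algebra_simps)
  have rowb: "-(\<Sum>j\<in>UNIV. M$i$j) \<le> A" for i
  proof -
    have "-(\<Sum>j\<in>UNIV. M$i$j) \<le> (\<Sum>j\<in>UNIV. \<bar>M$i$j\<bar>)"
      by (simp add: sum_negf[symmetric]) (intro sum_mono, auto)
    also have "\<dots> \<le> A" unfolding A_def by (rule member_le_sum) auto
    finally show ?thesis .
  qed
  have "(M *v p)$i \<ge> 1/2" for i
  proof -
    have "\<delta> * (-(\<Sum>j\<in>UNIV. M$i$j)) \<le> \<delta> * A" using rowb[of i] dpos by (intro mult_left_mono) auto
    then show ?thesis using Mp[of i] Mz[of i] dA by (simp add: algebra_simps)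
  qed
  then show ?thesis using ppos by blast
qed

lemma least:
  assumes p: "\<forall>i. p$i > 0" "\<forall>i. (M *v p)$i > 0"
  and s: "s \<ge> 0" and \<zeta>: "\<forall>i. \<zeta>$i \<ge> 0" "\<forall>i. k$i - s*r$i + (M *v \<zeta>)$i \<ge> 0"
  shows "z s $ i \<le> \<zeta> $ i"
proof (rule ccontr)
  assume ni: "\<not> ?thesis"
  obtain j where j: "\<forall>l. (z s $ l - \<zeta> $ l)/p$l \<le> (z s $ j - \<zeta> $ j)/p$j" using finite_argmax[of "\<lambda>l. (z s $ l - \<zeta> $ l)/p$l"] by blast
  define m where "m = (z s $ j - \<zeta> $ j)/p$j"
  have "(z s $ i - \<zeta> $ i)/p$i > 0" using p ni by simp
  then have mpos: "m > 0" using j m_def by (metis less_le_trans)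
  have le: "\<forall>l. z s $ l \<le> \<zeta> $ l + m * p$l"
  proof
    fix l have "(z s $ l - \<zeta> $ l)/p$l \<le> m" using j m_def by auto
    then show "z s $ l \<le> \<zeta> $ l + m * p$l" using p(1) by (simp add: pos_divide_le_eq algebra_simps)
  qed
  have eq: "z s $ j = \<zeta> $ j + m * p $ j" using p(1)[rule_format, of j] by (simp add: m_def)
  have ki: "(M *v \<zeta>) $ j + m * (M *v p) $ j \<le> (M *v z s) $ j"
    by (rule key_ineq[OF A2 le eq])
  have "z s $ j > 0" using eq mpos p(1) \<zeta>(1) by (smt (verit) mult_pos_pos)
  then have "k $ j - s * r $ j + (M *v z s) $ j = 0" using compl2[OF s] by auto
  moreover have "m * (M *v p) $ j > 0" using mpos p(2) by simp
  ultimately show False using ki \<zeta>(2) by (smt (verit))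
qed

lemma z_mono: assumes p: "\<forall>i. p$i > 0" "\<forall>i. (M *v p)$i > 0" and "0 \<le> s" "s \<le> s'"
  shows "z s $ i \<le> z s' $ i"
proof (rule least[OF p])
  show "0 \<le> s" by fact
  show "\<forall>i. 0 \<le> z s' $ i" using lcp_z assms by auto
  show "\<forall>i. 0 \<le> k $ i - s * r $ i + (M *v z s') $ i"
  proof
    fix i
    have "0 \<le> k $ i - s' * r $ i + (M *v z s') $ i" using wnn assms by auto
    moreover have "s * r $ i \<le> s' * r $ i" using assms A1 by (intro mult_right_mono) (auto intro: less_imp_le)
    ultimately show "0 \<le> k $ i - s * r $ i + (M *v z s') $ i" by linarith
  qed
qed

lemma z_lip: assumes p: "\<forall>i. p$i > 0" and Mp: "\<forall>i. (M *v p)$i \<ge> \<mu>" and mu: "\<mu> > 0"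
  and rho: "\<forall>i. r$i \<le> \<rho>" and ss: "0 \<le> s" "s \<le> s'"
  shows "z s' $ i \<le> z s $ i + ((s'-s)*\<rho>/\<mu>) * p$i"
proof -
  define t where "t = (s'-s)*\<rho>/\<mu>"
  have rpos: "\<rho> > 0" using A1 rho by (meson less_le_trans)
  have tnn: "t \<ge> 0" using ss rpos mu by (simp add: t_def)
  have Mp': "\<forall>i. (M *v p)$i > 0" using Mp mu by (meson less_le_trans)
  have "z s' $ i \<le> (z s + t *\<^sub>R p) $ i"
  proof (rule least[OF p Mp'])
    show "0 \<le> s'" using ss by simp
    show "\<forall>i. 0 \<le> (z s + t *\<^sub>R p) $ i" 
    proof
      fix i have "0 \<le> z s $ i" using lcp_z[OF ss(1)] by auto
      moreover have "0 \<le> t * p $ i" using tnn p[rule_format, of i] by simp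
      ultimately show "0 \<le> (z s + t *\<^sub>R p) $ i" by simp
    qed
    show "\<forall>i. 0 \<le> k $ i - s' * r $ i + (M *v (z s + t *\<^sub>R p)) $ i"
    proof
      fix i
      have e: "(M *v (z s + t *\<^sub>R p)) $ i = (M *v z s) $ i + t * (M *v p) $ i"
        by (simp add: matrix_vector_mult_def sum.distrib sum_distrib_left algebra_simps)
      have "0 \<le> k $ i - s * r $ i + (M *v z s) $ i" using wnn ss by auto
      moreover have "(s'-s) * r $ i \<le> (s'-s) * \<rho>" using ss rho by (intro mult_left_mono) auto
      moreover have "t * \<mu> \<le> t * (M *v p) $ i" using tnn Mp by (intro mult_left_mono) auto
      moreover have "t * \<mu> = (s'-s)*\<rho>" using mu by (simp add: t_def)
      ultimately show "0 \<le> k $ i - s' * r $ i + (M *v (z s + t *\<^sub>R p)) $ i"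
        unfolding e by (simp add: algebra_simps)
    qed
  qed
  then show ?thesis by (simp add: t_def)
qed

lemma z0: assumes p: "\<forall>i. p$i > 0" "\<forall>i. (M *v p)$i > 0" shows "z 0 $ i = 0"
proof -
  have "z 0 $ i \<le> (0::real^'d) $ i"
    by (rule least[OF p]) (use k_pos in \<open>auto intro: less_imp_le\<close>)
  then show ?thesis using lcp_z[of 0] by (simp add: antisym)
qed

end



lemma ode_formula:
  fixes M :: "real^'d^'d" and r k C :: "real^'d" and \<Theta> :: "real \<Rightarrow> real^'d"
  assumes ode: "\<And>t. t \<ge> 0 \<Longrightarrow> (\<Theta> has_vector_derivative
          (\<chi> i. \<Theta> t $ i * (r $ i - (\<Sum>j\<in>UNIV. M $ i $ j * \<Theta> t $ j)))) (at t within {0..})"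
    and init: "\<Theta> 0 = (\<chi> i. C $ i * \<epsilon> powr (k $ i))"
    and eps: "0 < \<epsilon>" "\<epsilon> < 1" and S: "0 \<le> S"
    and L_def: "L = ln (1/\<epsilon>)"
    and phi_def: "\<phi> = (\<lambda>u. \<Theta> (u * L))" and Z_def: "Z = (\<lambda>s. integral {0..s} \<phi>)"
  shows "\<forall>s\<in>{0..S}. (Z has_vector_derivative \<phi> s) (at s within {0..S})"
    and "\<forall>s\<in>{0..S}. \<forall>i. \<phi> s $ i = C $ i * exp (-L * (k $ i - s * r $ i + (M *v Z s) $ i))"
    and "continuous_on {0..S} Z"
    and "Z 0 = 0"
proof -
  have L: "L > 0" using eps by (simp add: L_def ln_div)
  have lneps: "ln \<epsilon> = - L" by (simp add: L_def ln_div eps)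
  have dphi: "(\<phi> has_vector_derivative L *\<^sub>R (\<chi> i. \<phi> u $ i * (r $ i - (\<Sum>j\<in>UNIV. M $ i $ j * \<phi> u $ j))))
      (at u within {0..S})" if u: "u \<in> {0..S}" for u
  proof -
    have 1: "((\<lambda>u. u * L) has_vector_derivative L) (at u within {0..S})"
      unfolding has_real_derivative_iff_has_vector_derivative[symmetric]
      by (auto intro!: derivative_eq_intros)
    have "(\<Theta> has_vector_derivative (\<chi> i. \<Theta> (u*L) $ i * (r $ i - (\<Sum>j\<in>UNIV. M $ i $ j * \<Theta> (u*L) $ j))))
        (at (u*L) within {0..})" using ode[of "u*L"] u L by auto
    then have 2: "(\<Theta> has_vector_derivative (\<chi> i. \<Theta> (u*L) $ i * (r $ i - (\<Sum>j\<in>UNIV. M $ i $ j * \<Theta> (u*L) $ j))))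
        (at ((\<lambda>u. u * L) u) within (\<lambda>u. u * L) ` {0..S})"
      by (rule has_vector_derivative_within_subset) (use L in auto)
    from vector_diff_chain_within[OF 1 2] show ?thesis by (simp add: phi_def o_def)
  qed
  have contphi: "continuous_on {0..S} \<phi>"
    unfolding continuous_on_eq_continuous_within using dphi has_vector_derivative_continuous by blast
  have dZ: "\<forall>s\<in>{0..S}. (Z has_vector_derivative \<phi> s) (at s within {0..S})"
    unfolding Z_def using integral_has_vector_derivative[OF contphi] by auto
  then show "\<forall>s\<in>{0..S}. (Z has_vector_derivative \<phi> s) (at s within {0..S})" .
  show contZ: "continuous_on {0..S} Z"
    unfolding continuous_on_eq_continuous_within using dZ has_vector_derivative_continuous by blast
  show Z0: "Z 0 = 0" by (simp add: Z_def)
  show "\<forall>s\<in>{0..S}. \<forall>i. \<phi> s $ i = C $ i * exp (-L * (k $ i - s * r $ i + (M *v Z s) $ i))"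
  proof (intro ballI allI)
    fix s i assume s: "s \<in> {0..S}"
    define Y where "Y = (\<lambda>s. (M *v Z s) $ i)"
    have dY: "(Y has_real_derivative (M *v \<phi> u) $ i) (at u within {0..S})" if "u \<in> {0..S}" for u
    proof -
      have bl: "bounded_linear (\<lambda>x. (M *v x) $ i)"
        using bounded_linear_compose[OF bounded_linear_vec_nth[of i] matrix_vector_mul_bounded_linear[of M]] by (simp add: o_def)
      show ?thesis unfolding has_real_derivative_iff_has_vector_derivative Y_def
        using bounded_linear.has_vector_derivative[OF bl, of Z "\<phi> u"] dZ that by auto
    qed
    have dp: "((\<lambda>s. \<phi> s $ i) has_real_derivative L * (\<phi> u $ i * (r $ i - (M *v \<phi> u) $ i))) (at u within {0..S})"
      if "u \<in> {0..S}" for u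
      unfolding has_real_derivative_iff_has_vector_derivative
      using bounded_linear.has_vector_derivative[OF bounded_linear_vec_nth[of i], OF dphi[OF that]]
      by (simp add: matrix_vector_mult_def)
    define h where "h = (\<lambda>s. \<phi> s $ i * exp (- (L * (s * r $ i - Y s))))"
    have dh: "(h has_real_derivative 0) (at u within {0..S})" if "u \<in> {0..S}" for u
    proof -
      have dg: "((\<lambda>u. -(L*(u*r$i - Y u))) has_real_derivative -(L*(r$i - (M *v \<phi> u)$i))) (at u within {0..S})"
        by (auto intro!: derivative_eq_intros dY[OF that])
      have de: "((\<lambda>s. exp (-(L*(s*r$i - Y s)))) has_real_derivative exp (- (L * (u * r $ i - Y u))) * (-(L*(r$i - (M *v \<phi> u)$i)))) (at u within {0..S})"
        using DERIV_chain2[OF DERIV_exp dg] by simp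
      have "(h has_real_derivative
          (L * (\<phi> u $ i * (r $ i - (M *v \<phi> u) $ i))) * exp (- (L * (u * r $ i - Y u)))
          + (exp (- (L * (u * r $ i - Y u))) * (-(L*(r$i - (M *v \<phi> u)$i)))) * \<phi> u $ i)
          (at u within {0..S})"
        unfolding h_def by (rule DERIV_mult[OF dp[OF that] de])
      then show ?thesis by (simp add: algebra_simps)
    qed
    have "\<exists>c. \<forall>x\<in>{0..S}. h x = c"
    proof (rule has_derivative_zero_constant)
      show "convex {0..S}" by simp
      fix x assume "x \<in> {0..S}"
      show "(h has_derivative (\<lambda>h. 0)) (at x within {0..S})"
      proof -
        have "(*) (0::real) = (\<lambda>h. 0)" by auto
        then show ?thesis using dh[OF \<open>x \<in> {0..S}\<close>] by (simp add: has_field_derivative_def)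
      qed
    qed
    then obtain c where c: "\<forall>x\<in>{0..S}. h x = c" by blast
    have "h s = h 0" using c s S by auto
    also have "h 0 = C $ i * exp (- L * k $ i)"
      using init eps by (simp add: h_def Y_def Z0 phi_def powr_def lneps)
    finally have "\<phi> s $ i * exp (- (L * (s * r $ i - Y s))) = C $ i * exp (- L * k $ i)" by (simp add: h_def)
    then have "\<phi> s $ i = C $ i * exp (- L * k $ i) / exp (- (L * (s * r $ i - Y s)))"
      by (simp add: field_simps)
    also have "\<dots> = C $ i * exp (-L * (k $ i - s * r $ i + Y s))"
    proof -
      have "exp (- L * k $ i) / exp (- (L * (s * r $ i - Y s))) = exp (- L * k $ i - (- (L * (s * r $ i - Y s))))"
        by (rule exp_diff[symmetric])
      also have "\<dots> = exp (-L * (k $ i - s * r $ i + Y s))" by (simp add: algebra_simps)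
      finally show ?thesis by (simp add: times_divide_eq_right[symmetric] del: times_divide_eq_right)
    qed
    finally show "\<phi> s $ i = C $ i * exp (-L * (k $ i - s * r $ i + (M *v Z s) $ i))" by (simp add: Y_def)
  qed
qed



lemma comp_deriv:
  assumes "(Z has_vector_derivative D) F"
  shows "((\<lambda>s. (Z s :: real^'d) $ j) has_real_derivative D $ j) F"
  unfolding has_real_derivative_iff_has_vector_derivative
  using bounded_linear.has_vector_derivative[OF bounded_linear_vec_nth[of j], OF assms] by simp

lemma Z_nonneg:
  fixes Z D :: "real \<Rightarrow> real^'d"
  assumes dZ: "\<forall>s\<in>{0..S}. (Z has_vector_derivative D s) (at s within {0..S})"
    and Dpos: "\<forall>s\<in>{0..S}. \<forall>j. D s $ j \<ge> 0"
    and contZ: "continuous_on {0..S} Z" and Z0: "Z 0 = 0" and s: "s \<in> {0..S}"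
  shows "0 \<le> Z s $ j"
proof -
  have "(\<lambda>s. Z s $ j) 0 \<le> (\<lambda>s. Z s $ j) s"
  proof (rule DERIV_nonneg_imp_increasing_open[where f="\<lambda>s. Z s $ j"])
    show "0 \<le> s" using s by simp
    show "continuous_on {0..s} (\<lambda>s. Z s $ j)"
      by (rule continuous_on_subset[OF cont_comp[OF contZ]]) (use s in auto)
  next
    fix x assume x: "0 < x" "x < s"
    then have xi: "x \<in> interior {0..S}" using s by auto
    have "((\<lambda>s. Z s $ j) has_real_derivative D x $ j) (at x within {0..S})"
      using comp_deriv[OF dZ[rule_format, of x]] x s by auto
    then have dx: "((\<lambda>s. Z s $ j) has_real_derivative D x $ j) (at x)"
      using at_within_interior[OF xi] by simp
    then show "\<exists>y. ((\<lambda>s. Z s $ j) has_real_derivative y) (at x) \<and> 0 \<le> y"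
    proof -
      have "0 \<le> D x $ j" using Dpos x s by auto
      then show ?thesis using dx by blast
    qed
  qed
  then show ?thesis using Z0 by simp
qed

lemma upper_bound:
  fixes M :: "real^'d^'d" and Z z D :: "real \<Rightarrow> real^'d" and p C k r :: "real^'d"
  assumes A2: "\<forall>i j. i \<noteq> j \<longrightarrow> M $ i $ j \<le> 0"
    and p: "\<forall>i. p$i > 0" and Mp: "\<forall>i. (M *v p)$i \<ge> \<mu>" and mu: "\<mu> > 0" and eta: "\<eta> > 0"
    and L: "L \<ge> 0" and S: "0 \<le> S"
    and dZ: "\<forall>s\<in>{0..S}. (Z has_vector_derivative D s) (at s within {0..S})"
    and Dform: "\<forall>s\<in>{0..S}. \<forall>i. D s $ i = C $ i * exp (-L * (k $ i - s * r $ i + (M *v Z s) $ i))"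
    and Cpos: "\<forall>i. C$i > 0"
    and contZ: "continuous_on {0..S} Z" and contz: "\<forall>j. continuous_on {0..S} (\<lambda>s. z s $ j)"
    and Z0: "Z 0 = 0" and z0: "\<forall>j. z 0 $ j = 0"
    and zmono: "\<forall>s s' j. 0 \<le> s \<longrightarrow> s \<le> s' \<longrightarrow> z s $ j \<le> z s' $ j"
    and wnn: "\<forall>s\<in>{0..S}. \<forall>i. k$i - s*r$i + (M *v z s)$i \<ge> 0"
    and Lbig: "\<forall>i. C$i * exp(-L*\<eta>*\<mu>) < \<eta> * p$i"
  shows "\<forall>s\<in>{0..S}. \<forall>j. Z s $ j < z s $ j + (\<eta> + \<eta>* s) * p$j"
proof (rule ccontr)
  define g where "g j s = Z s $ j - z s $ j - (\<eta> + \<eta>* s) * p$j" for j s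
  define B where "B = {s\<in>{0..S}. \<exists>j. 0 \<le> g j s}"
  assume "\<not> ?thesis"
  then obtain s0 j where "s0 \<in> {0..S}" "\<not> (Z s0 $ j < z s0 $ j + (\<eta> + \<eta> * s0) * p$j)" by blast
  then have "s0 \<in> B" by (auto simp: B_def g_def intro!: exI[of _ j])
  then have Bne: "B \<noteq> {}" by blast
  have contg: "continuous_on {0..S} (g j)" for j
    unfolding g_def by (intro continuous_on_diff continuous_on_add continuous_on_mult continuous_on_const
        continuous_on_id cont_comp[OF contZ] contz[rule_format])
  have "B = (\<Union>j. {s\<in>{0..S}. (\<lambda>s. 0) s \<le> g j s})" by (auto simp: B_def)
  moreover have "closed (\<Union>j. {s\<in>{0..S}. (\<lambda>s. 0) s \<le> g j s})"
  proof -
    have cl: "closed {s\<in>{0..S}. (\<lambda>s. 0) s \<le> g j s}" for j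
      by (rule continuous_on_closed_Collect_le[OF continuous_on_const contg]) simp
    show ?thesis by (rule closed_UN) (simp, rule ballI, rule cl)
  qed
  ultimately have Bcl: "closed B" by simp
  have Bbdd: "bdd_below B" by (auto simp: B_def bdd_below_def)
  define s1 where "s1 = Inf B"
  have s1B: "s1 \<in> B" unfolding s1_def using closed_contains_Inf[OF Bne Bbdd Bcl] .
  have below: "\<forall>j. g j s < 0" if "s \<in> {0..S}" "s < s1" for s
  proof (rule ccontr)
    assume "\<not> (\<forall>j. g j s < 0)"
    then have "s \<in> B" using that unfolding B_def by (auto simp: not_less)
    then have "s1 \<le> s" unfolding s1_def using Bbdd by (rule cInf_lower)
    then show False using that by simp
  qed
  obtain j0 where j0: "0 \<le> g j0 s1" and s1r: "0 \<le> s1" "s1 \<le> S" using s1B by (auto simp: B_def)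
  have s1pos: "0 < s1"
  proof (rule ccontr)
    assume "\<not> 0 < s1" then have "s1 = 0" using s1r by simp
    then have "g j0 s1 = - \<eta> * p$j0" using Z0 z0 by (simp add: g_def)
    moreover have "\<eta> * p$j0 > 0" using eta p by simp
    ultimately show False using j0 by simp
  qed
  obtain i where i: "\<forall>j. g j s1 / p$j \<le> g i s1 / p$i" using finite_argmax[of "\<lambda>j. g j s1 / p$j"] by blast
  define m where "m = g i s1 / p$i"
  have "0 \<le> g j0 s1 / p$j0" using j0 p[rule_format, of j0] by simp
  then have m0: "0 \<le> m" using i m_def by (metis order_trans)
  define \<tau> where "\<tau> = \<eta> + \<eta>* s1"
  have tau: "\<tau> \<ge> \<eta>" using eta s1r by (simp add: \<tau>_def)
  have le: "\<forall>j. Z s1 $ j \<le> z s1 $ j + (\<tau>+m)*p$j"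
  proof
    fix j have "g j s1 / p$j \<le> m" using i m_def by auto
    then have "g j s1 \<le> m * p$j" using p by (simp add: pos_divide_le_eq)
    then show "Z s1 $ j \<le> z s1 $ j + (\<tau>+m)*p$j" by (simp add: g_def \<tau>_def algebra_simps)
  qed
  have "g i s1 = m * p$i" using p[rule_format, of i] by (simp add: m_def)
  then have eq: "Z s1 $ i = z s1 $ i + (\<tau>+m)*p$i" by (simp add: g_def \<tau>_def algebra_simps)
  have ki: "(M *v z s1) $ i + (\<tau>+m) * (M *v p) $ i \<le> (M *v Z s1) $ i"
    by (rule key_ineq[OF A2 le eq])
  have "(\<tau>+m) * \<mu> \<le> (\<tau>+m) * (M *v p) $ i" using tau eta m0 Mp by (intro mult_left_mono) auto
  moreover have "\<eta> * \<mu> \<le> (\<tau>+m) * \<mu>" using tau m0 mu by (intro mult_right_mono) auto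
  moreover have "0 \<le> k$i - s1*r$i + (M *v z s1)$i" using wnn s1r by auto
  ultimately have V: "\<eta> * \<mu> \<le> k$i - s1*r$i + (M *v Z s1)$i" using ki by linarith
  have "L * (\<eta> * \<mu>) \<le> L * (k$i - s1*r$i + (M *v Z s1)$i)" using V L by (rule mult_left_mono)
  then have "exp (-L * (k $ i - s1 * r $ i + (M *v Z s1) $ i)) \<le> exp (-L*\<eta>*\<mu>)" by simp
  then have "D s1 $ i \<le> C$i * exp(-L*\<eta>*\<mu>)" using Dform s1r Cpos[rule_format, of i]
    by (simp add: mult_left_mono)
  then have Dlt: "D s1 $ i < \<eta> * p$i" using Lbig by (meson le_less_trans)
  have dZi: "((\<lambda>s. Z s $ i) has_real_derivative D s1 $ i) (at s1 within {0..S})"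
    using comp_deriv[OF dZ[rule_format, of s1]] s1r by auto
  obtain y where y: "0 \<le> y" "y < s1" "Z s1 $ i - Z y $ i < (\<eta> * p$i) * (s1 - y)"
    using left_diff_lt[OF dZi s1pos s1r(2) Dlt] by blast
  have zy: "z y $ i \<le> z s1 $ i" using zmono y by auto
  have "(\<eta> + \<eta>*y) * p$i + (\<eta> * p$i) * (s1 - y) = \<tau> * p$i" by (simp add: \<tau>_def algebra_simps)
  then have "g i y > g i s1" using y(3) zy by (simp add: g_def \<tau>_def algebra_simps)
  moreover have "g i s1 \<ge> 0" using \<open>g i s1 = m * p$i\<close> m0 p[rule_format, of i] by simp
  moreover have "g i y < 0" using below[of y] y s1r by auto
  ultimately show False by simp
qed

lemma lower_bound:
  fixes M :: "real^'d^'d" and Z z D :: "real \<Rightarrow> real^'d" and p C k r :: "real^'d"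
  assumes A2: "\<forall>i j. i \<noteq> j \<longrightarrow> M $ i $ j \<le> 0"
    and p: "\<forall>i. p$i > 0" and Mp: "\<forall>i. (M *v p)$i \<ge> \<mu>" and mu: "\<mu> > 0" and eta: "\<eta> > 0"
    and L: "L \<ge> 0" and S: "0 \<le> S"
    and dZ: "\<forall>s\<in>{0..S}. (Z has_vector_derivative D s) (at s within {0..S})"
    and Dform: "\<forall>s\<in>{0..S}. \<forall>i. D s $ i = C $ i * exp (-L * (k $ i - s * r $ i + (M *v Z s) $ i))"
    and Cpos: "\<forall>i. C$i > 0"
    and contZ: "continuous_on {0..S} Z" and contz: "\<forall>j. continuous_on {0..S} (\<lambda>s. z s $ j)"
    and Z0: "Z 0 = 0" and z0: "\<forall>j. z 0 $ j = 0"
    and zlip: "\<forall>s s' j. 0 \<le> s \<longrightarrow> s \<le> s' \<longrightarrow> z s' $ j - z s $ j \<le> \<Lambda> * (s' - s)"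
    and compl: "\<forall>s\<in>{0..S}. \<forall>i. 0 < z s $ i \<longrightarrow> k$i - s*r$i + (M *v z s)$i = 0"
    and Lbig: "\<forall>i. \<Lambda> < C$i * exp(L*\<eta>*\<mu>)"
  shows "\<forall>s\<in>{0..S}. \<forall>j. z s $ j - \<eta> * p$j < Z s $ j"
proof (rule ccontr)
  have Dpos: "\<forall>s\<in>{0..S}. \<forall>j. D s $ j \<ge> 0" using Dform Cpos by (simp add: less_imp_le)
  have Znn: "0 \<le> Z s $ j" if "s \<in> {0..S}" for s j
    using Z_nonneg[OF dZ Dpos contZ Z0 that] .
  define g where "g j s = Z s $ j - z s $ j + \<eta> * p$j" for j s
  define B where "B = {s\<in>{0..S}. \<exists>j. g j s \<le> 0}"
  assume "\<not> ?thesis"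
  then obtain s0 j where "s0 \<in> {0..S}" "\<not> (z s0 $ j - \<eta> * p$j < Z s0 $ j)" by blast
  then have "s0 \<in> B" by (auto simp: B_def g_def intro!: exI[of _ j])
  then have Bne: "B \<noteq> {}" by blast
  have contg: "continuous_on {0..S} (g j)" for j
    unfolding g_def by (intro continuous_on_diff continuous_on_add continuous_on_mult continuous_on_const
        continuous_on_id cont_comp[OF contZ] contz[rule_format])
  have "B = (\<Union>j. {s\<in>{0..S}. g j s \<le> (\<lambda>s. 0) s})" by (auto simp: B_def)
  moreover have "closed (\<Union>j. {s\<in>{0..S}. g j s \<le> (\<lambda>s. 0) s})"
  proof -
    have cl: "closed {s\<in>{0..S}. g j s \<le> (\<lambda>s. 0) s}" for j
      by (rule continuous_on_closed_Collect_le[OF contg continuous_on_const]) simp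
    show ?thesis by (rule closed_UN) (simp, rule ballI, rule cl)
  qed
  ultimately have Bcl: "closed B" by simp
  have Bbdd: "bdd_below B" by (auto simp: B_def bdd_below_def)
  define s1 where "s1 = Inf B"
  have s1B: "s1 \<in> B" unfolding s1_def using closed_contains_Inf[OF Bne Bbdd Bcl] .
  have below: "\<forall>j. g j s > 0" if "s \<in> {0..S}" "s < s1" for s
  proof (rule ccontr)
    assume "\<not> (\<forall>j. g j s > 0)"
    then have "s \<in> B" using that unfolding B_def by (auto simp: not_less)
    then have "s1 \<le> s" unfolding s1_def using Bbdd by (rule cInf_lower)
    then show False using that by simp
  qed
  obtain j0 where j0: "g j0 s1 \<le> 0" and s1r: "0 \<le> s1" "s1 \<le> S" using s1B by (auto simp: B_def)
  have s1pos: "0 < s1"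
  proof (rule ccontr)
    assume "\<not> 0 < s1" then have "s1 = 0" using s1r by simp
    then have "g j0 s1 = \<eta> * p$j0" using Z0 z0 by (simp add: g_def)
    moreover have "\<eta> * p$j0 > 0" using eta p by simp
    ultimately show False using j0 by simp
  qed
  obtain i where i: "\<forall>j. - (g j s1 / p$j) \<le> - (g i s1 / p$i)" using finite_argmax[of "\<lambda>j. - (g j s1 / p$j)"] by blast
  define m where "m = g i s1 / p$i"
  have "g j0 s1 / p$j0 \<le> 0" using j0 p[rule_format, of j0] by (simp add: divide_nonpos_pos)
  then have m0: "m \<le> 0" using i[rule_format, of j0] m_def by linarith
  define \<tau> where "\<tau> = \<eta> - m"
  have tau: "\<tau> \<ge> \<eta>" using m0 by (simp add: \<tau>_def)
  have le: "\<forall>j. z s1 $ j \<le> Z s1 $ j + \<tau>*p$j"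
  proof
    fix j have "m \<le> g j s1 / p$j" using i m_def by auto
    then have "m * p$j \<le> g j s1" using p by (simp add: pos_le_divide_eq)
    then show "z s1 $ j \<le> Z s1 $ j + \<tau>*p$j" by (simp add: g_def \<tau>_def algebra_simps)
  qed
  have gi: "g i s1 = m * p$i" using p[rule_format, of i] by (simp add: m_def)
  then have eq: "z s1 $ i = Z s1 $ i + \<tau>*p$i" by (simp add: g_def \<tau>_def algebra_simps)
  have ki: "(M *v Z s1) $ i + \<tau> * (M *v p) $ i \<le> (M *v z s1) $ i"
    by (rule key_ineq[OF A2 le eq])
  have "\<tau> * p$i > 0" using tau eta p[rule_format, of i] by simp
  then have "z s1 $ i > 0" using eq Znn[of s1 i] s1r by simp
  then have w0: "k$i - s1*r$i + (M *v z s1)$i = 0" using compl s1r by auto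
  have "\<tau> * \<mu> \<le> \<tau> * (M *v p) $ i" using tau eta Mp by (intro mult_left_mono) auto
  moreover have "\<eta> * \<mu> \<le> \<tau> * \<mu>" using tau mu by (intro mult_right_mono) auto
  ultimately have V: "k$i - s1*r$i + (M *v Z s1)$i \<le> - (\<eta> * \<mu>)" using ki w0 by linarith
  have "L * (k$i - s1*r$i + (M *v Z s1)$i) \<le> L * (- (\<eta> * \<mu>))" using V L by (rule mult_left_mono)
  then have "exp (L*\<eta>*\<mu>) \<le> exp (-L * (k $ i - s1 * r $ i + (M *v Z s1) $ i))" by simp
  then have "C$i * exp(L*\<eta>*\<mu>) \<le> D s1 $ i" using Dform s1r Cpos[rule_format, of i]
    by (simp add: mult_left_mono)
  then have Dgt: "D s1 $ i > \<Lambda>" using Lbig by (meson less_le_trans)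
  have dZi: "((\<lambda>s. Z s $ i) has_real_derivative D s1 $ i) (at s1 within {0..S})"
    using comp_deriv[OF dZ[rule_format, of s1]] s1r by auto
  obtain y where y: "0 \<le> y" "y < s1" "Z s1 $ i - Z y $ i > \<Lambda> * (s1 - y)"
    using left_diff_gt[OF dZi s1pos s1r(2) Dgt] by blast
  have zy: "z s1 $ i - z y $ i \<le> \<Lambda> * (s1 - y)" using zlip y by auto
  have "g i y < g i s1" using y(3) zy by (simp add: g_def algebra_simps)
  moreover have "g i s1 \<le> 0" using gi m0 p[rule_format, of i] by (simp add: mult_nonpos_nonneg)
  moreover have "g i y > 0" using below[of y] y s1r by auto
  ultimately show False by simp
qed



lemma ev_L: "\<forall>\<^sub>F \<epsilon> in at_right (0::real). 0 < \<epsilon> \<and> \<epsilon> < 1 \<and> X < ln (1/\<epsilon>)"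
  unfolding eventually_at_right_field
proof (intro exI[of _ "min 1 (exp (-X))"] conjI allI impI)
  show "(0::real) < min 1 (exp (- X))" by simp
  fix y :: real assume y: "0 < y" "y < min 1 (exp (- X))"
  then show "0 < y" "y < 1" by auto
  have "ln y < ln (exp (-X))" using y by (subst ln_less_cancel_iff) auto
  then show "X < ln (1/y)" using y by (simp add: ln_div)
qed

lemma mv_diff_est:
  fixes M :: "real^'d^'d"
  assumes "\<forall>j. \<bar>Z$j - z$j\<bar> \<le> \<delta>"
  shows "\<bar>(M *v Z)$i - (M *v z)$i\<bar> \<le> (\<Sum>j\<in>UNIV. \<bar>M$i$j\<bar>) * \<delta>"
proof -
  have "(M *v Z)$i - (M *v z)$i = (\<Sum>j\<in>UNIV. M$i$j * (Z$j - z$j))"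
    by (simp add: matrix_vector_mult_def sum_subtractf[symmetric] algebra_simps)
  also have "\<bar>\<dots>\<bar> \<le> (\<Sum>j\<in>UNIV. \<bar>M$i$j * (Z$j - z$j)\<bar>)" by (rule sum_abs)
  also have "\<dots> \<le> (\<Sum>j\<in>UNIV. \<bar>M$i$j\<bar> * \<delta>)"
    by (rule sum_mono) (use assms in \<open>auto simp: abs_mult intro: mult_left_mono\<close>)
  also have "\<dots> = (\<Sum>j\<in>UNIV. \<bar>M$i$j\<bar>) * \<delta>" by (simp add: sum_distrib_right)
  finally show ?thesis .
qed



theorem proposition4:
  fixes X :: "real^'d^'n" and y :: "real^'n"
    and M :: "real^'d^'d" and r :: "real^'d"
    and C k :: "real^'d"
    and \<theta> :: "real \<Rightarrow> real \<Rightarrow> real^'d"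
    and w z :: "real \<Rightarrow> real^'d"
  assumes M_def: "M = transpose X ** X"
    and r_def: "r = transpose X *v y"
    and A1: "\<forall>i. r $ i > 0"
    and A2: "\<forall>i j. i \<noteq> j \<longrightarrow> M $ i $ j \<le> 0"
    and C_pos: "\<forall>i. C $ i > 0"
    and k_pos: "\<forall>i. k $ i > 0"
    and ode: "\<And>\<epsilon> t. \<epsilon> > 0 \<Longrightarrow> t \<ge> 0 \<Longrightarrow>
       (\<theta> \<epsilon> has_vector_derivative
          (\<chi> i. \<theta> \<epsilon> t $ i * (r $ i - (\<Sum>j\<in>UNIV. M $ i $ j * \<theta> \<epsilon> t $ j))))
       (at t within {0..})"
    and init: "\<And>\<epsilon>. \<epsilon> > 0 \<Longrightarrow> \<theta> \<epsilon> 0 = (\<chi> i. C $ i * \<epsilon> powr (k $ i))"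
    and lcp_eq: "\<And>s. s \<ge> 0 \<Longrightarrow> w s = k - s *\<^sub>R r + M *v z s"
    and lcp_w: "\<And>s. s \<ge> 0 \<Longrightarrow> \<forall>i. w s $ i \<ge> 0"
    and lcp_z: "\<And>s. s \<ge> 0 \<Longrightarrow> \<forall>i. z s $ i \<ge> 0"
    and lcp_compl: "\<And>s. s \<ge> 0 \<Longrightarrow> w s \<bullet> z s = 0"
  shows "\<forall>K. compact K \<and> K \<subseteq> {0..} \<longrightarrow>
           uniform_limit K
             (\<lambda>\<epsilon> s. \<chi> i. ln (\<theta> \<epsilon> (s * ln (1 / \<epsilon>)) $ i) / ln \<epsilon>) w (at_right 0)
         \<and> uniform_limit K
             (\<lambda>\<epsilon> s. integral {0..s} (\<lambda>u. \<theta> \<epsilon> (u * ln (1 / \<epsilon>)))) z (at_right 0)"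
proof -
  note lcp = A1 A2 k_pos lcp_eq lcp_w lcp_z lcp_compl
  obtain p where p: "\<forall>i. p$i > 0" and Mp: "\<forall>i. (M *v p)$i \<ge> 1/2" using p_exists[OF lcp] by blast
  define \<mu> :: real where "\<mu> = 1/2"
  have mu: "\<mu> > 0" by (simp add: \<mu>_def)
  have Mp': "\<forall>i. (M *v p)$i \<ge> \<mu>" unfolding \<mu>_def using Mp by blast
  have Mpp: "\<forall>i. (M *v p)$i > 0"
  proof
    fix i show "(M *v p)$i > 0" using Mp[rule_format, of i] by linarith
  qed
  define \<rho> where "\<rho> = (\<Sum>i\<in>UNIV. r$i)"
  have rho: "\<forall>i. r$i \<le> \<rho>"
  proof
    fix i show "r$i \<le> \<rho>" unfolding \<rho>_def by (rule member_le_sum) (use A1 in \<open>auto intro: less_imp_le\<close>)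
  qed
  define P where "P = (\<Sum>i\<in>UNIV. p$i)"
  have Pb: "\<forall>i. p$i \<le> P"
  proof
    fix i show "p$i \<le> P" unfolding P_def by (rule member_le_sum) (use p in \<open>auto intro: less_imp_le\<close>)
  qed
  have P0: "0 < P" using Pb[rule_format, of undefined] p[rule_format, of undefined] by linarith
  have rho0: "0 < \<rho>" using rho[rule_format, of undefined] A1[rule_format, of undefined] by linarith
  define \<Lambda> where "\<Lambda> = \<rho> / \<mu> * P"
  have Lam0: "0 \<le> \<Lambda>" using rho0 mu P0 by (simp add: \<Lambda>_def)
  have zmono: "\<forall>s s' j. 0 \<le> s \<longrightarrow> s \<le> s' \<longrightarrow> z s $ j \<le> z s' $ j"
    using z_mono[OF lcp p Mpp] by blast
  have zlip: "\<forall>s s' j. 0 \<le> s \<longrightarrow> s \<le> s' \<longrightarrow> z s' $ j - z s $ j \<le> \<Lambda> * (s' - s)"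
  proof (intro allI impI)
    fix s s' :: real and j assume ss: "0 \<le> s" "s \<le> s'"
    have "z s' $ j \<le> z s $ j + ((s'-s)*\<rho>/\<mu>) * p$j" by (rule z_lip[OF lcp p Mp' mu rho ss])
    moreover have "((s'-s)*\<rho>/\<mu>) * p$j \<le> ((s'-s)*\<rho>/\<mu>) * P"
      using ss rho0 mu Pb by (intro mult_left_mono) auto
    moreover have "((s'-s)*\<rho>/\<mu>) * P = \<Lambda> * (s' - s)" using mu by (simp add: \<Lambda>_def field_simps)
    ultimately show "z s' $ j - z s $ j \<le> \<Lambda> * (s' - s)" by linarith
  qed
  have z0: "\<forall>j. z 0 $ j = 0" using z0[OF lcp p Mpp] by blast
  have contz: "\<forall>j. continuous_on {0..S} (\<lambda>s. z s $ j)" for S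
  proof
    fix j
    have "\<Lambda>-lipschitz_on {0..S} (\<lambda>s. z s $ j)"
    proof (rule lipschitz_onI)
      fix x y :: real assume xy: "x \<in> {0..S}" "y \<in> {0..S}"
      show "dist (z x $ j) (z y $ j) \<le> \<Lambda> * dist x y"
      proof (cases "x \<le> y")
        case True
        then have "z x $ j \<le> z y $ j" "z y $ j - z x $ j \<le> \<Lambda> * (y - x)" using zmono zlip xy by auto
        then show ?thesis using True by (simp add: dist_real_def)
      next
        case False
        then have "z y $ j \<le> z x $ j" "z x $ j - z y $ j \<le> \<Lambda> * (x - y)" using zmono zlip xy by auto
        then show ?thesis using False by (simp add: dist_real_def)
      qed
    qed (rule Lam0)
    then show "continuous_on {0..S} (\<lambda>s. z s $ j)" by (rule lipschitz_on_continuous_on)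
  qed
  have wnn': "\<forall>s\<in>{0..S}. \<forall>i. k$i - s*r$i + (M *v z s)$i \<ge> 0" for S using wnn[OF lcp] by auto
  have compl': "\<forall>s\<in>{0..S}. \<forall>i. 0 < z s $ i \<longrightarrow> k$i - s*r$i + (M *v z s)$i = 0" for S
    using compl2[OF lcp] by auto
  show ?thesis
  proof (intro allI impI)
    fix K :: "real set" assume K: "compact K \<and> K \<subseteq> {0..}"
    then have "bounded K" using compact_imp_bounded by blast
    then obtain B where B: "\<forall>x\<in>K. \<bar>x\<bar> \<le> B" unfolding bounded_real by blast
    define S where "S = max 0 B"
    have S0: "0 \<le> S" by (simp add: S_def)
    have KS: "K \<subseteq> {0..S}"
    proof
      fix x assume x: "x \<in> K"
      then have "0 \<le> x" using K by auto
      moreover have "x \<le> S" using B x by (simp add: S_def) (smt (verit))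
      ultimately show "x \<in> {0..S}" by simp
    qed
    define fw where "fw = (\<lambda>\<epsilon> s. \<chi> i. ln (\<theta> \<epsilon> (s * ln (1 / \<epsilon>)) $ i) / ln \<epsilon>)"
    define fz where "fz = (\<lambda>\<epsilon> s. integral {0..s} (\<lambda>u. \<theta> \<epsilon> (u * ln (1 / \<epsilon>))))"
    have key: "\<forall>\<^sub>F \<epsilon> in at_right 0. \<forall>s\<in>{0..S}. dist (fw \<epsilon> s) (w s) < e \<and> dist (fz \<epsilon> s) (z s) < e"
      if e: "e > 0" for e
    proof -
      define A where "A = (\<Sum>i\<in>UNIV. \<Sum>j\<in>UNIV. \<bar>M$i$j\<bar>)"
      have A0: "0 \<le> A" unfolding A_def by (intro sum_nonneg) auto
      define N where "N = real CARD('d) + A + 1"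
      have N1: "N \<ge> 1" using A0 by (simp add: N_def)
      define Q where "Q = (1+S)*(P+1)"
      have Q0: "0 < Q" using S0 P0 by (simp add: Q_def)
      define \<eta> where "\<eta> = e / (4 * N * Q)"
      have eta: "\<eta> > 0" using e N1 Q0 by (simp add: \<eta>_def)
      define \<delta> where "\<delta> = \<eta> * (1+S) * P"
      have d0: "0 \<le> \<delta>" using eta S0 P0 by (simp add: \<delta>_def)
      have RQ: "(1+S)*P \<le> Q" unfolding Q_def using S0 by (intro mult_left_mono) auto
      have "N * \<delta> = (N * \<eta>) * ((1+S)*P)" by (simp add: \<delta>_def algebra_simps)
      also have "\<dots> \<le> (N * \<eta>) * Q" using RQ N1 eta by (intro mult_left_mono) auto
      also have "\<dots> = e/4" using N1 Q0 by (simp add: \<eta>_def field_simps)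
      finally have Nd: "N * \<delta> \<le> e/4" .
      have cd: "real CARD('d) * \<delta> \<le> e/4"
        using Nd d0 A0 by (smt (verit) N_def mult_right_mono)
      have Ad: "A * \<delta> \<le> e/4"
        using Nd d0 A0 by (smt (verit) N_def mult_right_mono of_nat_0_le_iff)
      define lc where "lc = (\<Sum>i\<in>UNIV. \<bar>ln (C$i)\<bar>)"
      have lc0: "0 \<le> lc" unfolding lc_def by (intro sum_nonneg) auto
      define a where "a i = C$i/(\<eta>*p$i) + \<Lambda>/C$i" for i
      have a0: "0 \<le> a i" for i using C_pos p eta Lam0 unfolding a_def
        by (intro add_nonneg_nonneg divide_nonneg_pos) (auto intro: less_imp_le)
      define X0 where "X0 = 4*lc/e + (\<Sum>i\<in>UNIV. a i)/(\<eta>*\<mu>)"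
      have sa: "a i \<le> (\<Sum>i\<in>UNIV. a i)" for i by (rule member_le_sum) (use a0 in auto)
      have lcX: "4*lc/e \<le> X0"
        unfolding X0_def using sum_nonneg[of UNIV a] a0 eta mu by simp
      have aX: "a i/(\<eta>*\<mu>) \<le> X0" for i
      proof -
        have "a i/(\<eta>*\<mu>) \<le> (\<Sum>i\<in>UNIV. a i)/(\<eta>*\<mu>)" using sa[of i] eta mu by (simp add: divide_right_mono)
        moreover have "0 \<le> 4*lc/e" using lc0 e by simp
        ultimately show ?thesis unfolding X0_def by linarith
      qed
      show ?thesis
        using ev_L[of X0]
      proof (rule eventually_mono)
        fix \<epsilon> :: real assume eps: "0 < \<epsilon> \<and> \<epsilon> < 1 \<and> X0 < ln (1/\<epsilon>)"
        define L where "L = ln (1/\<epsilon>)"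
        define \<phi> where "\<phi> = (\<lambda>u. \<theta> \<epsilon> (u * L))"
        define Z where "Z = (\<lambda>s. integral {0..s} \<phi>)"
        have LX: "X0 < L" using eps by (simp add: L_def)
        have Lpos: "0 < L" using eps by (simp add: L_def ln_div)
        have lneps: "ln \<epsilon> = - L" using eps by (simp add: L_def ln_div)
        have epos: "0 < \<epsilon>" "\<epsilon> < 1" using eps by auto
        note of = ode_formula[OF ode[OF epos(1)] init[OF epos(1)] epos S0 L_def \<phi>_def Z_def]
        have dZ: "\<forall>s\<in>{0..S}. (Z has_vector_derivative \<phi> s) (at s within {0..S})" by (rule of(1))
        have form: "\<forall>s\<in>{0..S}. \<forall>i. \<phi> s $ i = C $ i * exp (-L * (k $ i - s * r $ i + (M *v Z s) $ i))"
          by (rule of(2))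
        have contZ: "continuous_on {0..S} Z" by (rule of(3))
        have Z0: "Z 0 = 0" by (rule of(4))
        have xa: "a i < L * \<eta> * \<mu>" for i
        proof -
          have "a i/(\<eta>*\<mu>) < L" using aX[of i] LX by linarith
          then show ?thesis using eta mu by (simp add: pos_divide_less_eq mult.assoc)
        qed
        have ex: "a i < exp (L * \<eta> * \<mu>)" for i
          using xa[of i] exp_ge_add_one_self[of "L * \<eta> * \<mu>"] by linarith
        have Lbig1: "\<forall>i. C$i * exp(-L*\<eta>*\<mu>) < \<eta> * p$i"
        proof
          fix i
          have "C$i/(\<eta>*p$i) \<le> a i" using C_pos p Lam0 unfolding a_def
            by (simp add: less_imp_le)
          then have "C$i/(\<eta>*p$i) < exp (L * \<eta> * \<mu>)" using ex[of i] by linarith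
          then have "C$i < exp (L * \<eta> * \<mu>) * (\<eta>*p$i)" using eta p[rule_format, of i]
            by (simp add: pos_divide_less_eq)
          then show "C$i * exp(-L*\<eta>*\<mu>) < \<eta> * p$i"
            by (simp add: exp_minus field_simps)
        qed
        have Lbig2: "\<forall>i. \<Lambda> < C$i * exp(L*\<eta>*\<mu>)"
        proof
          fix i
          have "\<Lambda>/C$i \<le> a i" using C_pos p eta unfolding a_def
            by (simp add: less_imp_le)
          then have "\<Lambda>/C$i < exp (L * \<eta> * \<mu>)" using ex[of i] by linarith
          then show "\<Lambda> < C$i * exp(L*\<eta>*\<mu>)" using C_pos[rule_format, of i]
            by (simp add: pos_divide_less_eq mult.commute)
        qed
        have up: "\<forall>s\<in>{0..S}. \<forall>j. Z s $ j < z s $ j + (\<eta> + \<eta> * s) * p$j"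
          by (rule upper_bound[OF A2 p Mp' mu eta less_imp_le[OF Lpos] S0 dZ form C_pos contZ contz Z0 z0 zmono wnn' Lbig1])
        have lo: "\<forall>s\<in>{0..S}. \<forall>j. z s $ j - \<eta> * p$j < Z s $ j"
          by (rule lower_bound[OF A2 p Mp' mu eta less_imp_le[OF Lpos] S0 dZ form C_pos contZ contz Z0 z0 zlip compl' Lbig2])
        have diff: "\<bar>Z s $ j - z s $ j\<bar> \<le> \<delta>" if s: "s \<in> {0..S}" for s j
        proof -
          have "(\<eta> + \<eta> * s) * p$j \<le> (\<eta> + \<eta> * S) * p$j"
            using s eta p[rule_format, of j] by (intro mult_right_mono) auto
          also have "\<dots> \<le> (\<eta> + \<eta> * S) * P" using Pb eta S0 by (intro mult_left_mono) auto
          also have "\<dots> = \<delta>" by (simp add: \<delta>_def algebra_simps)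
          finally have 1: "(\<eta> + \<eta> * s) * p$j \<le> \<delta>" .
          have "\<eta> * p$j \<le> (\<eta> + \<eta> * s) * p$j"
            using s eta p[rule_format, of j] by (intro mult_right_mono) auto
          then show ?thesis using 1 up lo s by (smt (verit))
        qed
        show "\<forall>s\<in>{0..S}. dist (fw \<epsilon> s) (w s) < e \<and> dist (fz \<epsilon> s) (z s) < e"
        proof (intro ballI conjI)
          fix s assume s: "s \<in> {0..S}"
          have fzZ: "fz \<epsilon> s = Z s" by (simp add: fz_def Z_def \<phi>_def L_def)
          have "dist (fz \<epsilon> s) (z s) = norm (Z s - z s)" by (simp add: fzZ dist_norm)
          also have "\<dots> \<le> (\<Sum>j\<in>UNIV. \<bar>(Z s - z s) $ j\<bar>)" by (rule norm_le_l1_cart)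
          also have "\<dots> \<le> (\<Sum>j\<in>(UNIV::'d set). \<delta>)" by (intro sum_mono) (use diff[OF s] in simp)
          also have "\<dots> = real CARD('d) * \<delta>" by simp
          also have "\<dots> < e" using cd e by linarith
          finally show "dist (fz \<epsilon> s) (z s) < e" .
          have comp: "fw \<epsilon> s $ i - w s $ i = ((M *v Z s) $ i - (M *v z s) $ i) - ln (C$i) / L" for i
          proof -
            have "fw \<epsilon> s $ i = ln (\<phi> s $ i) / ln \<epsilon>" by (simp add: fw_def \<phi>_def L_def)
            also have "\<phi> s $ i = C $ i * exp (-L * (k $ i - s * r $ i + (M *v Z s) $ i))" using form s by auto
            also have "ln (C $ i * exp (-L * (k $ i - s * r $ i + (M *v Z s) $ i)))
                = ln (C$i) + (-L * (k $ i - s * r $ i + (M *v Z s) $ i))"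
              using C_pos[rule_format, of i] by (simp add: ln_mult)
            finally have "fw \<epsilon> s $ i = (k $ i - s * r $ i + (M *v Z s) $ i) - ln (C$i) / L"
              using lneps Lpos by (simp add: field_simps)
            moreover have "w s $ i = k $ i - s * r $ i + (M *v z s) $ i" using w_comp[OF lcp] s by auto
            ultimately show ?thesis by simp
          qed
          have lcL: "lc / L \<le> e/4"
          proof -
            have "4*lc/e < L" using lcX LX by linarith
            then have "4*lc < L * e" using e by (simp add: pos_divide_less_eq)
            then show ?thesis using Lpos by (simp add: pos_divide_le_eq mult.commute)
          qed
          have "dist (fw \<epsilon> s) (w s) = norm (fw \<epsilon> s - w s)" by (simp add: dist_norm)
          also have "\<dots> \<le> (\<Sum>i\<in>UNIV. \<bar>(fw \<epsilon> s - w s) $ i\<bar>)" by (rule norm_le_l1_cart)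
          also have "\<dots> \<le> (\<Sum>i\<in>UNIV. (\<Sum>j\<in>UNIV. \<bar>M$i$j\<bar>) * \<delta> + \<bar>ln (C$i)\<bar> / L)"
          proof (intro sum_mono)
            fix i
            have "\<bar>(M *v Z s) $ i - (M *v z s) $ i\<bar> \<le> (\<Sum>j\<in>UNIV. \<bar>M$i$j\<bar>) * \<delta>"
              by (rule mv_diff_est) (use diff[OF s] in auto)
            moreover have "\<bar>ln (C$i) / L\<bar> = \<bar>ln (C$i)\<bar> / L" using Lpos by simp
            moreover have "\<bar>(fw \<epsilon> s - w s) $ i\<bar> = \<bar>((M *v Z s) $ i - (M *v z s) $ i) - ln (C$i) / L\<bar>"
              using comp[of i] by simp
            moreover have "\<bar>((M *v Z s) $ i - (M *v z s) $ i) - ln (C$i) / L\<bar>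
                \<le> \<bar>(M *v Z s) $ i - (M *v z s) $ i\<bar> + \<bar>ln (C$i) / L\<bar>" by (rule abs_triangle_ineq4)
            ultimately show "\<bar>(fw \<epsilon> s - w s) $ i\<bar> \<le> (\<Sum>j\<in>UNIV. \<bar>M$i$j\<bar>) * \<delta> + \<bar>ln (C$i)\<bar> / L"
              by linarith
          qed
          also have "\<dots> = A * \<delta> + lc / L"
            by (simp add: sum.distrib A_def lc_def sum_distrib_right sum_divide_distrib)
          also have "\<dots> < e" using Ad lcL e by linarith
          finally show "dist (fw \<epsilon> s) (w s) < e" .
        qed
      qed
    qed
    have "uniform_limit {0..S} fw w (at_right 0)"
      unfolding uniform_limit_iff
    proof (intro allI impI)
      fix e :: real assume "0 < e"
      from key[OF this] show "\<forall>\<^sub>F n in at_right 0. \<forall>x\<in>{0..S}. dist (fw n x) (w x) < e"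
        by (rule eventually_mono) blast
    qed
    moreover have "uniform_limit {0..S} fz z (at_right 0)"
      unfolding uniform_limit_iff
    proof (intro allI impI)
      fix e :: real assume "0 < e"
      from key[OF this] show "\<forall>\<^sub>F n in at_right 0. \<forall>x\<in>{0..S}. dist (fz n x) (z x) < e"
        by (rule eventually_mono) blast
    qed
    ultimately show "uniform_limit K fw w (at_right 0) \<and> uniform_limit K fz z (at_right 0)"
      using uniform_limit_on_subset KS by blast
  qed
qed

end
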